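(* Let $\alpha,\gamma\in\mathbb{C}$ and $\Delta\in\mathbb{C}^*$. Consider extensions of conformal $\mathrm{SV}$-modules $$0\to \mathbb{C}c_\gamma\to E\to V(\alpha,\Delta)\to 0,$$ realized as $E=\mathbb{C}c_\gamma\oplus\mathbb{C}[\partial]v_\Delta$ (as $\mathbb{C}[\partial]$-modules), with $\mathbb{C}c_\gamma$ an $\mathrm{SV}$-submodule and $$L_\lambda v_\Delta=(\partial+\alpha+\Delta\lambda)v_\Delta+f(\lambda)c_\gamma,\quad M_\lambda v_\Delta=g(\lambda)c_\gamma,\quad Y_\lambda v_\Delta=h(\lambda)c_\gamma,$$ for polynomials $f,g,h\in\mathbb{C}[\lambda]$. Nontrivial extensions of this form exist if and only if $\alpha+\gamma=0$ and $\Delta\in\{1,2,-\tfrac12\}$. In these cases they are given, up to equivalence, by: (i) $\Delta=1$: $g=h=0$, $f(\lambda)=a_2\lambda^2$ with $a_2\neq0$; (ii) $\Delta=2$: $g=h=0$, $f(\lambda)=a_3\lambda^3$ with $a_3\neq0$; (iii) $\Delta=-\tfrac12$: $f=g=0$, $h(\lambda)=b_0$ with $b_0\neq0$. In particular, $\mathrm{Ext}(V(\alpha,\Delta),\mathbb{C}c_{-\alpha})$ is $1$-dimensional in each of the cases (i)–(iii).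
   Context: A Lie conformal algebra is a $\mathbb{C}[\partial]$-module $R$ with a $\mathbb{C}$-bilinear $\lambda$-bracket $R\otimes R\to\mathbb{C}[\lambda]\otimes R$, $a\otimes b\mapsto[a_\lambda b]$, satisfying $[\partial a_\lambda b]=-\lambda[a_\lambda b]$, $[a_\lambda\partial b]=(\partial+\lambda)[a_\lambda b]$, $[a_\lambda b]=-[b_{-\lambda-\partial}a]$, and $[a_\lambda[b_\mu c]]=[[a_\lambda b]_{\lambda+\mu}c]+[b_\mu[a_\lambda c]]$. A conformal module over $R$ is a $\mathbb{C}[\partial]$-module $V$ with a linear map $a\mapsto a_\lambda\in\mathrm{End}_{\mathbb{C}}(V)\otimes\mathbb{C}[\lambda]$ such that $[a_\lambda,b_\mu]=[a_\lambda b]_{\lambda+\mu}$ and $(\partial a)_\lambda=[\partial,a_\lambda]=-\lambda a_\lambda$. The Schrödinger–Virasoro conformal algebra $\mathrm{SV}$ is the free $\mathbb{C}[\partial]$-module with basis $L,M,Y$ whose nonzero $\lambda$-brackets (up to skew-symmetry) are $[L_\lambda L]=(\partial+2\lambda)L$, $[L_\lambda Y]=(\partial+\tfrac32\lambda)Y$, $[L_\lambda M]=(\partial+\lambda)M$, $[Y_\lambda Y]=(\partial+2\lambda)M$. For $\alpha,\Delta\in\mathbb{C}$, $V(\alpha,\Delta)=\mathbb{C}[\partial]v_\Delta$ is the free rank-one module with $L_\lambda v_\Delta=(\partial+\alpha+\Delta\lambda)v_\Delta$, $M_\lambda v_\Delta=Y_\lambda v_\Delta=0$. For $\gamma\in\mathbb{C}$,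 $\mathbb{C}c_\gamma$ is the one-dimensional module with $\partial c_\gamma=\gamma c_\gamma$ and all $\lambda$-actions zero. An extension of $W$ by $V$ is an exact sequence of conformal modules $0\to V\to E\to W\to0$; two extensions are equivalent if there is a module homomorphism between the middle terms commuting with the identity maps on $V$ and $W$; an extension is trivial if equivalent to $V\oplus W$. $\mathrm{Ext}(W,V)$ denotes the vector space of extension cocycles modulo coboundaries (cocycles giving trivial extensions). *)

theory Defs
  imports "HOL-Computational_Algebra.Polynomial"
begin

datatype sv_gen = L | M | Y

definition sv_gens :: "sv_gen list" where
  "sv_gens = [L, M, Y]"

text \<open>An element of SV is p_L(d) L + p_M(d) M + p_Y(d) Y, represented by the
  coefficient function (generator to polynomial in d).  The formal variable
  lambda is treated as a complex number (polynomial identities in lambda, mu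
  over C are equivalent to identities of their values).\<close>
type_synonym sv_elem = "sv_gen \<Rightarrow> complex poly"

text \<open>The lambda-bracket of generators at lam, as an element of SV:
  coefficient of generator c in [a_lam b].  Brackets with the first argument
  M or Y and second L are obtained from skew-symmetry.\<close>
fun gen_bracket :: "sv_gen \<Rightarrow> sv_gen \<Rightarrow> complex \<Rightarrow> sv_gen \<Rightarrow> complex poly" where
  "gen_bracket L L lam c = (if c = L then [:2 * lam, 1:] else 0)"
| "gen_bracket L M lam c = (if c = M then [:lam, 1:] else 0)"
| "gen_bracket L Y lam c = (if c = Y then [:3/2 * lam, 1:] else 0)"
| "gen_bracket M L lam c = (if c = M then [:lam:] else 0)"
| "gen_bracket Y L lam c = (if c = Y then [:3/2 * lam, 1/2:] else 0)"
| "gen_bracket Y Y lam c = (if c = M then [:2 * lam, 1:] else 0)"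
| "gen_bracket _ _ lam c = 0"

text \<open>Sesquilinear extension:
  [x_lam y] = sum_{a,b} x_a(-lam) y_b(d+lam) [a_lam b].\<close>
definition sv_bracket :: "sv_elem \<Rightarrow> complex \<Rightarrow> sv_elem \<Rightarrow> sv_elem" where
  "sv_bracket x lam y = (\<lambda>c. sum_list (map (\<lambda>(a, b).
      smult (poly (x a) (- lam)) (pcompose (y b) [:lam, 1:] * gen_bracket a b lam c))
      (List.product sv_gens sv_gens)))"

text \<open>(z, p) stands for z c_gamma + p(d) v_Delta.\<close>
type_synonym E_elem = "complex \<times> complex poly"

definition addE :: "E_elem \<Rightarrow> E_elem \<Rightarrow> E_elem" where
  "addE e e' = (fst e + fst e', snd e + snd e')"

definition smulE :: "complex \<Rightarrow> E_elem \<Rightarrow> E_elem" where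
  "smulE s e = (s * fst e, smult s (snd e))"

definition subE :: "E_elem \<Rightarrow> E_elem \<Rightarrow> E_elem" where
  "subE e e' = (fst e - fst e', snd e - snd e')"

definition delE :: "complex \<Rightarrow> E_elem \<Rightarrow> E_elem" where
  "delE \<gamma> e = (\<gamma> * fst e, [:0, 1:] * snd e)"

text \<open>Given lambda-actions of the generators on E, the action of a general
  element x = sum_a p_a(d) a of SV: x_lam = sum_a p_a(-lam) a_lam
  (this is forced by (d a)_lam = - lam a_lam).\<close>
definition sv_act :: "(sv_gen \<Rightarrow> complex \<Rightarrow> E_elem \<Rightarrow> E_elem) \<Rightarrow> sv_elem \<Rightarrow> complex \<Rightarrow> E_elem \<Rightarrow> E_elem" where
  "sv_act act x lam e =
     addE (smulE (poly (x L) (- lam)) (act L lam e))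
      (addE (smulE (poly (x M) (- lam)) (act M lam e))
            (smulE (poly (x Y) (- lam)) (act Y lam e)))"

definition conformal_module :: "complex \<Rightarrow> (sv_gen \<Rightarrow> complex \<Rightarrow> E_elem \<Rightarrow> E_elem) \<Rightarrow> bool" where
  "conformal_module \<gamma> act \<longleftrightarrow>
     (\<forall>a lam e e'. act a lam (addE e e') = addE (act a lam e) (act a lam e')) \<and>
     (\<forall>a lam s e. act a lam (smulE s e) = smulE s (act a lam e)) \<and>
     (\<forall>x lam e. subE (delE \<gamma> (sv_act act x lam e)) (sv_act act x lam (delE \<gamma> e))
                  = smulE (- lam) (sv_act act x lam e)) \<and>
     (\<forall>x y lam mu e. subE (sv_act act x lam (sv_act act y mu e)) (sv_act act y mu (sv_act act x lam e))
                  = sv_act act (sv_bracket x lam y) (lam + mu) e)"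

definition ext_of_form :: "complex \<Rightarrow> complex \<Rightarrow> complex \<Rightarrow> complex poly \<Rightarrow> complex poly \<Rightarrow> complex poly
     \<Rightarrow> (sv_gen \<Rightarrow> complex \<Rightarrow> E_elem \<Rightarrow> E_elem) \<Rightarrow> bool" where
  "ext_of_form \<alpha> \<Delta> \<gamma> f g h act \<longleftrightarrow>
     conformal_module \<gamma> act \<and>
     (\<forall>a lam z. act a lam (z, 0) = (0, 0)) \<and>
     (\<forall>lam. act L lam (0, 1) = (poly f lam, [:\<alpha> + \<Delta> * lam, 1:]) \<and>
            act M lam (0, 1) = (poly g lam, 0) \<and>
            act Y lam (0, 1) = (poly h lam, 0))"

text \<open>Equivalence of two extensions (module structures act, act' on E):
  a module homomorphism E -> E' that is the identity on C c_gamma and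
  induces the identity on V(alpha, Delta).\<close>
definition ext_equiv :: "complex \<Rightarrow> (sv_gen \<Rightarrow> complex \<Rightarrow> E_elem \<Rightarrow> E_elem)
     \<Rightarrow> (sv_gen \<Rightarrow> complex \<Rightarrow> E_elem \<Rightarrow> E_elem) \<Rightarrow> bool" where
  "ext_equiv \<gamma> act act' \<longleftrightarrow> (\<exists>\<phi>.
     (\<forall>e e'. \<phi> (addE e e') = addE (\<phi> e) (\<phi> e')) \<and>
     (\<forall>s e. \<phi> (smulE s e) = smulE s (\<phi> e)) \<and>
     (\<forall>e. \<phi> (delE \<gamma> e) = delE \<gamma> (\<phi> e)) \<and>
     (\<forall>a lam e. \<phi> (act a lam e) = act' a lam (\<phi> e)) \<and>
     (\<forall>z. \<phi> (z, 0) = (z, 0)) \<and>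
     (\<forall>e. snd (\<phi> e) = snd e))"

definition trivial_ext :: "complex \<Rightarrow> complex \<Rightarrow> complex
     \<Rightarrow> (sv_gen \<Rightarrow> complex \<Rightarrow> E_elem \<Rightarrow> E_elem) \<Rightarrow> bool" where
  "trivial_ext \<alpha> \<Delta> \<gamma> act \<longleftrightarrow>
     (\<exists>act0. ext_of_form \<alpha> \<Delta> \<gamma> 0 0 0 act0 \<and> ext_equiv \<gamma> act act0)"

definition is_cocycle :: "complex \<Rightarrow> complex \<Rightarrow> complex \<Rightarrow> complex poly \<Rightarrow> complex poly \<Rightarrow> complex poly \<Rightarrow> bool" where
  "is_cocycle \<alpha> \<Delta> \<gamma> f g h \<longleftrightarrow> (\<exists>act. ext_of_form \<alpha> \<Delta> \<gamma> f g h act)"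

definition is_coboundary :: "complex \<Rightarrow> complex \<Rightarrow> complex \<Rightarrow> complex poly \<Rightarrow> complex poly \<Rightarrow> complex poly \<Rightarrow> bool" where
  "is_coboundary \<alpha> \<Delta> \<gamma> f g h \<longleftrightarrow>
     (\<exists>act. ext_of_form \<alpha> \<Delta> \<gamma> f g h act \<and> trivial_ext \<alpha> \<Delta> \<gamma> act)"

definition nontrivial_ext :: "complex \<Rightarrow> complex \<Rightarrow> complex \<Rightarrow> complex poly \<Rightarrow> complex poly \<Rightarrow> complex poly \<Rightarrow> bool" where
  "nontrivial_ext \<alpha> \<Delta> \<gamma> f g h \<longleftrightarrow>
     (\<exists>act. ext_of_form \<alpha> \<Delta> \<gamma> f g h act \<and> \<not> trivial_ext \<alpha> \<Delta> \<gamma> act)"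

definition equiv_forms :: "complex \<Rightarrow> complex \<Rightarrow> complex
     \<Rightarrow> complex poly \<times> complex poly \<times> complex poly
     \<Rightarrow> complex poly \<times> complex poly \<times> complex poly \<Rightarrow> bool" where
  "equiv_forms \<alpha> \<Delta> \<gamma> u u' \<longleftrightarrow>
     (\<exists>act act'. ext_of_form \<alpha> \<Delta> \<gamma> (fst u) (fst (snd u)) (snd (snd u)) act \<and>
                 ext_of_form \<alpha> \<Delta> \<gamma> (fst u') (fst (snd u')) (snd (snd u')) act' \<and>
                 ext_equiv \<gamma> act act')"

text \<open>Ext = cocycles / coboundaries is one-dimensional: there is a cocycle w
  that is not a coboundary such that every cocycle is a scalar multiple of w
  modulo coboundaries.\<close>
definition ext_dim_one :: "complex \<Rightarrow> complex \<Rightarrow> complex \<Rightarrow> bool" where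
  "ext_dim_one \<alpha> \<Delta> \<gamma> \<longleftrightarrow>
     (\<exists>f0 g0 h0. is_cocycle \<alpha> \<Delta> \<gamma> f0 g0 h0 \<and> \<not> is_coboundary \<alpha> \<Delta> \<gamma> f0 g0 h0 \<and>
        (\<forall>f g h. is_cocycle \<alpha> \<Delta> \<gamma> f g h \<longrightarrow>
           (\<exists>s. is_coboundary \<alpha> \<Delta> \<gamma> (f - smult s f0) (g - smult s g0) (h - smult s h0))))"

end

theory Submission
  imports Defs
begin

definition Fsel :: "complex poly \<Rightarrow> complex poly \<Rightarrow> complex poly \<Rightarrow> sv_gen \<Rightarrow> complex poly" where
  "Fsel f g h a = (case a of L \<Rightarrow> f | M \<Rightarrow> g | Y \<Rightarrow> h)"

definition canon :: "complex \<Rightarrow> complex \<Rightarrow> complex \<Rightarrow> complex poly \<Rightarrow> complex poly \<Rightarrow> complex poly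
   \<Rightarrow> sv_gen \<Rightarrow> complex \<Rightarrow> E_elem \<Rightarrow> E_elem" where
  "canon \<alpha> \<Delta> \<gamma> f g h a lam e = (poly (snd e) (\<gamma> + lam) * poly (Fsel f g h a) lam,
      pcompose (snd e) [:lam, 1:] * (if a = L then [:\<alpha> + \<Delta> * lam, 1:] else 0))"

lemma canon_add: "canon \<alpha> \<Delta> \<gamma> f g h a lam (addE e e') = addE (canon \<alpha> \<Delta> \<gamma> f g h a lam e) (canon \<alpha> \<Delta> \<gamma> f g h a lam e')"
  by (simp add: canon_def addE_def pcompose_add algebra_simps)

lemma canon_smul: "canon \<alpha> \<Delta> \<gamma> f g h a lam (smulE s e) = smulE s (canon \<alpha> \<Delta> \<gamma> f g h a lam e)"
  by (simp add: canon_def smulE_def pcompose_smult)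

lemma canon_del: "subE (delE \<gamma> (sv_act (canon \<alpha> \<Delta> \<gamma> f g h) x lam e)) (sv_act (canon \<alpha> \<Delta> \<gamma> f g h) x lam (delE \<gamma> e))
                  = smulE (- lam) (sv_act (canon \<alpha> \<Delta> \<gamma> f g h) x lam e)"
  by (simp add: canon_def sv_act_def subE_def delE_def addE_def smulE_def pcompose_pCons pcompose_mult smult_add_right smult_add_left[symmetric] algebra_simps)

lemma fstid:
  fixes XL XY YL YY P A B C Dd E G lam mu a g \<Delta> :: complex
  assumes q1: "(a+g+lam+\<Delta>*mu)*A - (a+g+mu+\<Delta>*lam)*B = (lam-mu)*C"
  and q2: "-(a+g+mu+\<Delta>*lam)*E = (lam/2-mu)*G"
  and q3: "-(a+g+lam+\<Delta>*mu)*Dd = (mu/2-lam)*G"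
  shows "XL * (YL * ((a + \<Delta> * mu) * P + (g + lam) * P) * A) + XY * (YL * ((a + \<Delta> * mu) * P + (g + lam) * P) * Dd)
     - (YL * (XL * ((a + \<Delta> * lam) * P + (g + mu) * P) * B) + YY * (XL * ((a + \<Delta> * lam) * P + (g + mu) * P) * E))
   = XL * (2 * lam * YL + (- lam - mu) * YL) * (P * C) + (XL * (3 * lam * YY / 2 + (- lam - mu) * YY) + XY * (3 * lam * YL / 2 + (- lam - mu) * YL / 2)) * (P * G)"
proof -
  have "XL * (YL * ((a + \<Delta> * mu) * P + (g + lam) * P) * A) + XY * (YL * ((a + \<Delta> * mu) * P + (g + lam) * P) * Dd)
     - (YL * (XL * ((a + \<Delta> * lam) * P + (g + mu) * P) * B) + YY * (XL * ((a + \<Delta> * lam) * P + (g + mu) * P) * E))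
   - (XL * (2 * lam * YL + (- lam - mu) * YL) * (P * C) + (XL * (3 * lam * YY / 2 + (- lam - mu) * YY) + XY * (3 * lam * YL / 2 + (- lam - mu) * YL / 2)) * (P * G))
   = XL*YL*P*(((a+g+lam+\<Delta>*mu)*A - (a+g+mu+\<Delta>*lam)*B) - (lam-mu)*C)
     + XL*YY*P*((-(a+g+mu+\<Delta>*lam)*E) - (lam/2-mu)*G)
     - XY*YL*P*((-(a+g+lam+\<Delta>*mu)*Dd) - (mu/2-lam)*G)"
    by (simp add: field_simps)
  also have "\<dots> = 0" using q1 q2 q3 by simp
  finally show ?thesis by simp
qed



lemma jac_fst:
  assumes h1: "(\<alpha>+\<gamma>+lam+\<Delta>*mu) * poly f lam - (\<alpha>+\<gamma>+mu+\<Delta>*lam) * poly f mu = (lam - mu) * poly f (lam+mu)"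
  and h2: "-(\<alpha>+\<gamma>+mu+\<Delta>*lam) * poly h mu = (lam/2 - mu) * poly h (lam+mu)"
  and h3: "-(\<alpha>+\<gamma>+lam+\<Delta>*mu) * poly h lam = (mu/2 - lam) * poly h (lam+mu)"
  shows "fst (subE (sv_act (canon \<alpha> \<Delta> \<gamma> f 0 h) x lam (sv_act (canon \<alpha> \<Delta> \<gamma> f 0 h) y mu e))
               (sv_act (canon \<alpha> \<Delta> \<gamma> f 0 h) y mu (sv_act (canon \<alpha> \<Delta> \<gamma> f 0 h) x lam e)))
        = fst (sv_act (canon \<alpha> \<Delta> \<gamma> f 0 h) (sv_bracket x lam y) (lam + mu) e)"
proof -
  have e1: "lam + - (lam + mu) = - mu" by simp
  have e2: "mu + (\<gamma> + lam) = \<gamma> + (lam+mu)" "lam + (\<gamma> + mu) = \<gamma> + (lam+mu)" by (simp_all add: algebra_simps)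
  show ?thesis
   apply (simp add: canon_def sv_act_def subE_def addE_def smulE_def sv_bracket_def sv_gens_def Fsel_def poly_pcompose e1 e2)
   by (rule fstid[OF h1 h2 h3])
qed

lemma jac_snd:
  shows "snd (subE (sv_act (canon \<alpha> \<Delta> \<gamma> f 0 h) x lam (sv_act (canon \<alpha> \<Delta> \<gamma> f 0 h) y mu e))
               (sv_act (canon \<alpha> \<Delta> \<gamma> f 0 h) y mu (sv_act (canon \<alpha> \<Delta> \<gamma> f 0 h) x lam e)))
        = snd (sv_act (canon \<alpha> \<Delta> \<gamma> f 0 h) (sv_bracket x lam y) (lam + mu) e)"
proof -
  have e1: "lam + - (lam + mu) = - mu" by simp
  have e4: "\<And>t. lam + (mu + t) = lam + mu + t" "\<And>t. mu + (lam + t) = lam + mu + t" by (simp_all add: algebra_simps)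
  show ?thesis
  apply (rule poly_eq_poly_eq_iff[THEN iffD1])
  apply (rule ext)
  apply (simp add: canon_def sv_act_def subE_def addE_def smulE_def sv_bracket_def sv_gens_def Fsel_def poly_pcompose e1 e4)
  apply (simp add: algebra_simps)
  done
qed

lemma coeff_X_mult: "coeff ([:0, c:] * p) (Suc n) = c * coeff p n"
  by simp

lemma step1:
  fixes f :: "complex poly"
  assumes Hf: "\<And>lam mu. (lam + \<Delta>*mu) * poly f lam - (mu + \<Delta>*lam) * poly f mu = (lam-mu)*poly f (lam+mu)"
  and an: "coeff f n \<noteq> 0"
  shows "(1+\<Delta>*t) - (t+\<Delta>)*t^n - (1-t)*(1+t)^n = 0"
proof -
  define Q where "Q = [:0, 1+\<Delta>*t:] * f - [:0, t+\<Delta>:] * pcompose f [:0,t:] - [:0,1-t:] * pcompose f [:0,1+t:]"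
  have "poly Q s = 0" for s
  proof -
    have "poly Q s = (s + \<Delta>*(t*s))*poly f s - (t*s + \<Delta>*s)*poly f (t*s) - (s - t*s)*poly f (s + t*s)"
      unfolding Q_def by (simp add: poly_pcompose algebra_simps)
    also have "\<dots> = 0" using Hf[of s "t*s"] by simp
    finally show ?thesis .
  qed
  then have "Q = 0" using poly_all_0_iff_0 by blast
  then have "coeff Q (Suc n) = 0" by simp
  then have "coeff f n * ((1+\<Delta>*t) - (t+\<Delta>)*t^n - (1-t)*(1+t)^n) = 0"
    unfolding Q_def coeff_diff coeff_X_mult coeff_pcompose_linear by (simp add: algebra_simps)
  then show ?thesis using an by simp
qed

lemma coeff_constraint:
  fixes f :: "complex poly"
  assumes Hf: "\<And>lam mu. (lam + \<Delta>*mu) * poly f lam - (mu + \<Delta>*lam) * poly f mu = (lam-mu)*poly f (lam+mu)"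
  and D: "\<Delta> \<noteq> 0" and an: "coeff f n \<noteq> 0"
  shows "n = 1 \<or> (n = 2 \<and> \<Delta> = 1) \<or> (n = 3 \<and> \<Delta> = 2)"
proof -
  have S: "\<And>t. (1+\<Delta>*t) - (t+\<Delta>)*t^n - (1-t)*(1+t)^n = 0" using step1[OF Hf an] .
  consider "n = 0" | "n = 1" | "n = 2" | "n = 3" | "n \<ge> 4" by linarith
  then show ?thesis
  proof cases
    case 1
    then show ?thesis using S[of 0] D by simp
  next
    case 2 then show ?thesis by simp
  next
    case 3
    then show ?thesis using S[of "-1"] by (simp add: algebra_simps)
  next
    case 4
    then have "12 - 6 * \<Delta> = 0" using S[of 2] by (simp add: algebra_simps)
    then show ?thesis using 4 by simp
  next
    case 5
    define R where "R = [:1,\<Delta>:] - [:\<Delta>,1:] * monom 1 n - [:1,-1:] * [:1,1:]^n"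
    have "poly R t = 0" for t
      unfolding R_def using S[of t] by (simp add: poly_monom algebra_simps)
    then have "R = 0" using poly_all_0_iff_0 by blast
    then have c2: "coeff R (Suc (Suc 0)) = 0" by simp
    have p2: "coeff ([:1,1:]^n :: complex poly) (Suc (Suc 0)) = of_nat (n choose 2)"
      using coeff_linear_poly_power[of "Suc (Suc 0)" n "1::complex" 1] 5 by (simp add: numeral_2_eq_2)
    have p1: "coeff ([:1,1:]^n :: complex poly) (Suc 0) = of_nat n"
      using coeff_linear_poly_power[of "Suc 0" n "1::complex" 1] 5 by simp
    have m2: "coeff ([:\<Delta>,1:] * monom 1 n) (Suc (Suc 0)) = 0"
      using 5 by (simp add: coeff_monom)
    have "coeff ([:1,-1:] * [:1,1:]^n) (Suc (Suc 0)) = coeff ([:1,1:]^n :: complex poly) (Suc (Suc 0)) - coeff ([:1,1:]^n :: complex poly) (Suc 0)"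
      by simp
    with c2 m2 p1 p2 5 have "(of_nat (n choose 2) :: complex) = of_nat n"
      unfolding R_def by simp
    then have "n choose 2 = n" using of_nat_eq_iff by blast
    moreover have "n * (n - 1) div 2 > n" using 5
    proof -
      have "n * (n-1) \<ge> n * 3" using 5 by simp
      then have "n * (n-1) div 2 \<ge> (n*3) div 2" by (rule div_le_mono)
      moreover have "(n*3) div 2 > n" using 5 by linarith
      ultimately show ?thesis by linarith
    qed
    ultimately show ?thesis by (simp add: choose_two)
  qed
qed

definition G :: "sv_gen \<Rightarrow> sv_elem" where "G a = (\<lambda>c. if c = a then 1 else 0)"

lemma sv_act_gen: "sv_act act (G a) lam e = act a lam e"
  by (cases a) (simp_all add: sv_act_def G_def addE_def smulE_def)

definition cocyc :: "complex \<Rightarrow> complex \<Rightarrow> complex \<Rightarrow> complex poly \<Rightarrow> complex poly \<Rightarrow> complex poly \<Rightarrow> bool" where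
  "cocyc \<alpha> \<Delta> \<gamma> f g h \<longleftrightarrow> g = 0 \<and>
     (\<forall>lam mu. (\<alpha>+\<gamma>+lam+\<Delta>*mu) * poly f lam - (\<alpha>+\<gamma>+mu+\<Delta>*lam) * poly f mu = (lam - mu) * poly f (lam+mu)) \<and>
     (\<forall>lam mu. -(\<alpha>+\<gamma>+mu+\<Delta>*lam) * poly h mu = (lam/2 - mu) * poly h (lam+mu))"

lemma suff:
  assumes "cocyc \<alpha> \<Delta> \<gamma> f g h"
  shows "ext_of_form \<alpha> \<Delta> \<gamma> f g h (canon \<alpha> \<Delta> \<gamma> f g h)"
proof -
  from assms have g0: "g = 0" and H1: "\<And>lam mu. (\<alpha>+\<gamma>+lam+\<Delta>*mu) * poly f lam - (\<alpha>+\<gamma>+mu+\<Delta>*lam) * poly f mu = (lam - mu) * poly f (lam+mu)"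
    and H3: "\<And>lam mu. -(\<alpha>+\<gamma>+mu+\<Delta>*lam) * poly h mu = (lam/2 - mu) * poly h (lam+mu)"
    unfolding cocyc_def by blast+
  have J: "subE (sv_act (canon \<alpha> \<Delta> \<gamma> f 0 h) x lam (sv_act (canon \<alpha> \<Delta> \<gamma> f 0 h) y mu e))
               (sv_act (canon \<alpha> \<Delta> \<gamma> f 0 h) y mu (sv_act (canon \<alpha> \<Delta> \<gamma> f 0 h) x lam e))
        = sv_act (canon \<alpha> \<Delta> \<gamma> f 0 h) (sv_bracket x lam y) (lam + mu) e" for x y lam mu e
  proof (rule prod_eqI)
    have h3: "-(\<alpha>+\<gamma>+lam+\<Delta>*mu) * poly h lam = (mu/2 - lam) * poly h (lam+mu)" using H3[of mu lam] H3[of lam mu] by (simp only: add.commute[of mu lam])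
    show "fst (subE (sv_act (canon \<alpha> \<Delta> \<gamma> f 0 h) x lam (sv_act (canon \<alpha> \<Delta> \<gamma> f 0 h) y mu e))
               (sv_act (canon \<alpha> \<Delta> \<gamma> f 0 h) y mu (sv_act (canon \<alpha> \<Delta> \<gamma> f 0 h) x lam e)))
        = fst (sv_act (canon \<alpha> \<Delta> \<gamma> f 0 h) (sv_bracket x lam y) (lam + mu) e)"
      by (rule jac_fst[OF H1 H3 h3])
    show "snd (subE (sv_act (canon \<alpha> \<Delta> \<gamma> f 0 h) x lam (sv_act (canon \<alpha> \<Delta> \<gamma> f 0 h) y mu e))
               (sv_act (canon \<alpha> \<Delta> \<gamma> f 0 h) y mu (sv_act (canon \<alpha> \<Delta> \<gamma> f 0 h) x lam e)))
        = snd (sv_act (canon \<alpha> \<Delta> \<gamma> f 0 h) (sv_bracket x lam y) (lam + mu) e)"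
      by (rule jac_snd)
  qed
  have cm: "conformal_module \<gamma> (canon \<alpha> \<Delta> \<gamma> f 0 h)"
    unfolding conformal_module_def
    apply (intro conjI allI)
       apply (rule canon_add)
      apply (rule canon_smul)
     apply (rule canon_del)
    apply (rule J)
    done
  have rest: "(\<forall>a lam z. canon \<alpha> \<Delta> \<gamma> f 0 h a lam (z, 0) = (0, 0)) \<and>
     (\<forall>lam. canon \<alpha> \<Delta> \<gamma> f 0 h L lam (0, 1) = (poly f lam, [:\<alpha> + \<Delta> * lam, 1:]) \<and>
            canon \<alpha> \<Delta> \<gamma> f 0 h M lam (0, 1) = (poly 0 lam, 0) \<and>
            canon \<alpha> \<Delta> \<gamma> f 0 h Y lam (0, 1) = (poly h lam, 0))"
    by (simp add: canon_def Fsel_def pcompose_1)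
  show ?thesis
    unfolding ext_of_form_def g0 using cm rest by blast
qed


lemma del_gen:
  assumes "conformal_module \<gamma> act"
  shows "act a lam (delE \<gamma> e) = addE (delE \<gamma> (act a lam e)) (smulE lam (act a lam e))"
proof -
  from assms have "subE (delE \<gamma> (sv_act act (G a) lam e)) (sv_act act (G a) lam (delE \<gamma> e))
                  = smulE (- lam) (sv_act act (G a) lam e)"
    unfolding conformal_module_def by blast
  then have "subE (delE \<gamma> (act a lam e)) (act a lam (delE \<gamma> e)) = smulE (- lam) (act a lam e)"
    by (simp add: sv_act_gen)
  then show ?thesis
    by (simp add: subE_def delE_def addE_def smulE_def prod_eq_iff algebra_simps)
qed

lemma decomp: "(z, pCons c q) = addE (z, 0) (addE (smulE c (0, 1)) (delE \<gamma> (0, q)))"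
  by (simp add: addE_def smulE_def delE_def)

lemma uniq:
  assumes "ext_of_form \<alpha> \<Delta> \<gamma> f g h act"
  shows "act = canon \<alpha> \<Delta> \<gamma> f g h"
proof -
  from assms have cm: "conformal_module \<gamma> act" and z: "\<And>a lam z. act a lam (z, 0) = (0, 0)"
    and v: "\<And>lam. act L lam (0, 1) = (poly f lam, [:\<alpha> + \<Delta> * lam, 1:]) \<and>
            act M lam (0, 1) = (poly g lam, 0) \<and>
            act Y lam (0, 1) = (poly h lam, 0)"
    unfolding ext_of_form_def by auto
  from cm have add: "\<And>a lam e e'. act a lam (addE e e') = addE (act a lam e) (act a lam e')"
    and sm: "\<And>a lam s e. act a lam (smulE s e) = smulE s (act a lam e)"
    unfolding conformal_module_def by auto
  have cdel: "canon \<alpha> \<Delta> \<gamma> f g h a lam (delE \<gamma> e) = addE (delE \<gamma> (canon \<alpha> \<Delta> \<gamma> f g h a lam e)) (smulE lam (canon \<alpha> \<Delta> \<gamma> f g h a lam e))" for a lam e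
    by (cases a) (simp_all add: canon_def Fsel_def delE_def addE_def smulE_def pcompose_pCons pcompose_mult smult_add_right smult_add_left[symmetric] algebra_simps)
  have cv: "act a lam (0, 1) = canon \<alpha> \<Delta> \<gamma> f g h a lam (0, 1)" for a lam
    using v[of lam] by (cases a) (simp_all add: canon_def Fsel_def pcompose_1)
  have main: "\<forall>z. act a lam (z, p) = canon \<alpha> \<Delta> \<gamma> f g h a lam (z, p)" for a lam p
  proof (induction p)
    case 0
    then show ?case by (simp add: z canon_def)
  next
    case (pCons c q)
    show ?case
    proof
      fix z
      have "act a lam (z, pCons c q) = canon \<alpha> \<Delta> \<gamma> f g h a lam (addE (z, 0) (addE (smulE c (0, 1)) (delE \<gamma> (0, q))))"
        apply (subst decomp[of z c q \<gamma>])
        apply (simp only: add sm del_gen[OF cm] canon_add canon_smul cdel cv pCons.IH[rule_format])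
        apply (simp add: z canon_def)
        done
      then show "act a lam (z, pCons c q) = canon \<alpha> \<Delta> \<gamma> f g h a lam (z, pCons c q)"
        using decomp[of z c q \<gamma>] by simp
    qed
  qed
  show ?thesis
  proof (intro ext)
    fix a lam e show "act a lam e = canon \<alpha> \<Delta> \<gamma> f g h a lam e"
      using main[of a lam "snd e"] by (metis prod.collapse)
  qed
qed

lemma jac_inst:
  assumes "conformal_module \<gamma> (canon \<alpha> \<Delta> \<gamma> f g h)"
  shows "fst (subE (canon \<alpha> \<Delta> \<gamma> f g h a lam (canon \<alpha> \<Delta> \<gamma> f g h b mu (0,1))) (canon \<alpha> \<Delta> \<gamma> f g h b mu (canon \<alpha> \<Delta> \<gamma> f g h a lam (0,1))))
     = fst (sv_act (canon \<alpha> \<Delta> \<gamma> f g h) (sv_bracket (G a) lam (G b)) (lam+mu) (0,1))"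
proof -
  from assms have "subE (sv_act (canon \<alpha> \<Delta> \<gamma> f g h) (G a) lam (sv_act (canon \<alpha> \<Delta> \<gamma> f g h) (G b) mu (0,1)))
     (sv_act (canon \<alpha> \<Delta> \<gamma> f g h) (G b) mu (sv_act (canon \<alpha> \<Delta> \<gamma> f g h) (G a) lam (0,1)))
     = sv_act (canon \<alpha> \<Delta> \<gamma> f g h) (sv_bracket (G a) lam (G b)) (lam+mu) (0,1)"
    unfolding conformal_module_def by blast
  then show ?thesis by (simp only: sv_act_gen)
qed

lemma nec:
  assumes cm: "conformal_module \<gamma> (canon \<alpha> \<Delta> \<gamma> f g h)"
  shows "cocyc \<alpha> \<Delta> \<gamma> f g h"
proof -
  have e1: "\<And>lam mu::complex. lam + - (lam + mu) = - mu" by simp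
  have YY: "(lam - mu) * poly g (lam+mu) = 0" for lam mu
    using jac_inst[OF cm, of Y lam Y mu]
    apply (simp add: canon_def sv_act_def subE_def addE_def smulE_def sv_bracket_def sv_gens_def Fsel_def G_def poly_pcompose e1)
    done
  have LL: "(\<alpha>+\<gamma>+lam+\<Delta>*mu) * poly f lam - (\<alpha>+\<gamma>+mu+\<Delta>*lam) * poly f mu = (lam - mu) * poly f (lam+mu)" for lam mu
    using jac_inst[OF cm, of L lam L mu]
    apply (simp add: canon_def sv_act_def subE_def addE_def smulE_def sv_bracket_def sv_gens_def Fsel_def G_def poly_pcompose e1)
    apply (simp add: ac_simps)
    done
  have LY: "-(\<alpha>+\<gamma>+mu+\<Delta>*lam) * poly h mu = (lam/2 - mu) * poly h (lam+mu)" for lam mu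
    using jac_inst[OF cm, of L lam Y mu]
    apply (simp add: canon_def sv_act_def subE_def addE_def smulE_def sv_bracket_def sv_gens_def Fsel_def G_def poly_pcompose e1)
    apply (simp add: algebra_simps)
    done
  have "poly g t = 0" for t
    using YY[of "t/2 + 1/2" "t/2 - 1/2"] by simp
  then have "g = 0" using poly_all_0_iff_0 by blast
  then show ?thesis unfolding cocyc_def using LL LY by blast
qed

lemma eof_iff: "ext_of_form \<alpha> \<Delta> \<gamma> f g h act \<longleftrightarrow> act = canon \<alpha> \<Delta> \<gamma> f g h \<and> cocyc \<alpha> \<Delta> \<gamma> f g h"
proof
  assume a: "ext_of_form \<alpha> \<Delta> \<gamma> f g h act"
  then have u: "act = canon \<alpha> \<Delta> \<gamma> f g h" by (rule uniq)
  with a have "conformal_module \<gamma> (canon \<alpha> \<Delta> \<gamma> f g h)" unfolding ext_of_form_def by simp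
  then show "act = canon \<alpha> \<Delta> \<gamma> f g h \<and> cocyc \<alpha> \<Delta> \<gamma> f g h" using u nec by blast
next
  assume "act = canon \<alpha> \<Delta> \<gamma> f g h \<and> cocyc \<alpha> \<Delta> \<gamma> f g h"
  then show "ext_of_form \<alpha> \<Delta> \<gamma> f g h act" using suff by blast
qed

definition tri :: "complex \<Rightarrow> complex \<Rightarrow> complex \<Rightarrow> complex poly \<Rightarrow> complex poly \<Rightarrow> complex poly \<Rightarrow> bool" where
  "tri \<alpha> \<Delta> \<gamma> f g h \<longleftrightarrow> g = 0 \<and> h = 0 \<and> (\<exists>k. f = smult k [:\<alpha>+\<gamma>, \<Delta>:])"

lemma equiv_shift:
  assumes "f' = f + smult k [:\<alpha>+\<gamma>, \<Delta>:]"
  shows "ext_equiv \<gamma> (canon \<alpha> \<Delta> \<gamma> f g h) (canon \<alpha> \<Delta> \<gamma> f' g h)"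
  unfolding ext_equiv_def
proof (intro exI[of _ "\<lambda>e. (fst e + k * poly (snd e) \<gamma>, snd e)"] conjI allI)
  fix e e' :: E_elem
  show "(fst (addE e e') + k * poly (snd (addE e e')) \<gamma>, snd (addE e e')) =
       addE (fst e + k * poly (snd e) \<gamma>, snd e) (fst e' + k * poly (snd e') \<gamma>, snd e')"
    by (simp add: addE_def algebra_simps)
next
  fix s and e :: E_elem
  show "(fst (smulE s e) + k * poly (snd (smulE s e)) \<gamma>, snd (smulE s e)) =
       smulE s (fst e + k * poly (snd e) \<gamma>, snd e)"
    by (simp add: smulE_def algebra_simps)
next
  fix e :: E_elem
  show "(fst (delE \<gamma> e) + k * poly (snd (delE \<gamma> e)) \<gamma>, snd (delE \<gamma> e)) =
       delE \<gamma> (fst e + k * poly (snd e) \<gamma>, snd e)"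
    by (simp add: delE_def algebra_simps)
next
  fix a lam and e :: E_elem
  show "(fst (canon \<alpha> \<Delta> \<gamma> f g h a lam e) + k * poly (snd (canon \<alpha> \<Delta> \<gamma> f g h a lam e)) \<gamma>,
        snd (canon \<alpha> \<Delta> \<gamma> f g h a lam e)) =
       canon \<alpha> \<Delta> \<gamma> f' g h a lam (fst e + k * poly (snd e) \<gamma>, snd e)"
    using assms by (cases a) (simp_all add: canon_def Fsel_def poly_pcompose algebra_simps)
qed simp_all

lemma equiv_tri:
  assumes "ext_equiv \<gamma> (canon \<alpha> \<Delta> \<gamma> f g h) (canon \<alpha> \<Delta> \<gamma> 0 0 0)"
  shows "tri \<alpha> \<Delta> \<gamma> f g h"
proof -
  from assms obtain \<phi> where add: "\<And>e e'. \<phi> (addE e e') = addE (\<phi> e) (\<phi> e')"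
    and sm: "\<And>s e. \<phi> (smulE s e) = smulE s (\<phi> e)"
    and dl: "\<And>e. \<phi> (delE \<gamma> e) = delE \<gamma> (\<phi> e)"
    and ac: "\<And>a lam e. \<phi> (canon \<alpha> \<Delta> \<gamma> f g h a lam e) = canon \<alpha> \<Delta> \<gamma> 0 0 0 a lam (\<phi> e)"
    and z: "\<And>z. \<phi> (z, 0) = (z, 0)"
    and sn: "\<And>e. snd (\<phi> e) = snd e"
    unfolding ext_equiv_def by blast
  define k where "k = fst (\<phi> (0, 1))"
  have p1: "\<phi> (0, 1) = (k, 1)" using sn[of "(0,1)"] unfolding k_def by (metis prod.collapse snd_conv)
  have d: "(w, [:c, 1:]) = addE (w, 0) (addE (smulE c (0, 1)) (delE \<gamma> (0, 1)))" for w c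
    by (simp add: addE_def smulE_def delE_def)
  have phl: "\<phi> (w, [:c, 1:]) = (w + c * k + \<gamma> * k, [:c, 1:])" for w c
  proof -
    have "\<phi> (w, [:c, 1:]) = addE (\<phi> (w, 0)) (addE (smulE c (\<phi> (0, 1))) (delE \<gamma> (\<phi> (0, 1))))"
      by (subst d) (simp only: add sm dl)
    then show ?thesis by (simp add: z p1 addE_def smulE_def delE_def)
  qed
  have fl: "poly f lam = poly (smult (-k) [:\<alpha>+\<gamma>, \<Delta>:]) lam" for lam
  proof -
    have "\<phi> (canon \<alpha> \<Delta> \<gamma> f g h L lam (0, 1)) = canon \<alpha> \<Delta> \<gamma> 0 0 0 L lam (k, 1)" using ac p1 by simp
    then show ?thesis by (simp add: canon_def Fsel_def pcompose_1 phl algebra_simps add_eq_0_iff)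
  qed
  have gl: "poly g lam = 0" for lam
  proof -
    have "\<phi> (canon \<alpha> \<Delta> \<gamma> f g h M lam (0, 1)) = canon \<alpha> \<Delta> \<gamma> 0 0 0 M lam (k, 1)" using ac p1 by simp
    then show ?thesis by (simp add: canon_def Fsel_def z)
  qed
  have hl: "poly h lam = 0" for lam
  proof -
    have "\<phi> (canon \<alpha> \<Delta> \<gamma> f g h Y lam (0, 1)) = canon \<alpha> \<Delta> \<gamma> 0 0 0 Y lam (k, 1)" using ac p1 by simp
    then show ?thesis by (simp add: canon_def Fsel_def z)
  qed
  have "f = smult (-k) [:\<alpha>+\<gamma>, \<Delta>:]" using fl poly_eq_poly_eq_iff by blast
  moreover have "g = 0" using gl poly_all_0_iff_0 by blast
  moreover have "h = 0" using hl poly_all_0_iff_0 by blast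
  ultimately show ?thesis unfolding tri_def by blast
qed

lemma cocyc_zero: "cocyc \<alpha> \<Delta> \<gamma> 0 0 0"
  by (simp add: cocyc_def)

lemma tri_cocyc: "tri \<alpha> \<Delta> \<gamma> f g h \<Longrightarrow> cocyc \<alpha> \<Delta> \<gamma> f g h"
  unfolding tri_def cocyc_def
  apply (elim conjE exE)
  apply (simp add: algebra_simps)
  done

lemma trivial_iff:
  "trivial_ext \<alpha> \<Delta> \<gamma> (canon \<alpha> \<Delta> \<gamma> f g h) \<longleftrightarrow> tri \<alpha> \<Delta> \<gamma> f g h"
proof
  assume "trivial_ext \<alpha> \<Delta> \<gamma> (canon \<alpha> \<Delta> \<gamma> f g h)"
  then obtain act0 where a0: "ext_of_form \<alpha> \<Delta> \<gamma> 0 0 0 act0" and e0: "ext_equiv \<gamma> (canon \<alpha> \<Delta> \<gamma> f g h) act0"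
    unfolding trivial_ext_def by blast
  from a0 have "act0 = canon \<alpha> \<Delta> \<gamma> 0 0 0" by (rule uniq)
  with e0 show "tri \<alpha> \<Delta> \<gamma> f g h" using equiv_tri by simp
next
  assume t: "tri \<alpha> \<Delta> \<gamma> f g h"
  then obtain k where g: "g = 0" "h = 0" and fk: "f = smult k [:\<alpha>+\<gamma>, \<Delta>:]" unfolding tri_def by blast
  have "ext_equiv \<gamma> (canon \<alpha> \<Delta> \<gamma> f g h) (canon \<alpha> \<Delta> \<gamma> 0 0 0)"
    using equiv_shift[of 0 f "-k" \<alpha> \<gamma> \<Delta> g h] g fk by simp
  moreover have "ext_of_form \<alpha> \<Delta> \<gamma> 0 0 0 (canon \<alpha> \<Delta> \<gamma> 0 0 0)" by (rule suff[OF cocyc_zero])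
  ultimately show "trivial_ext \<alpha> \<Delta> \<gamma> (canon \<alpha> \<Delta> \<gamma> f g h)" unfolding trivial_ext_def by blast
qed

lemma is_cocycle_iff: "is_cocycle \<alpha> \<Delta> \<gamma> f g h \<longleftrightarrow> cocyc \<alpha> \<Delta> \<gamma> f g h"
  unfolding is_cocycle_def eof_iff by blast

lemma nontrivial_iff: "nontrivial_ext \<alpha> \<Delta> \<gamma> f g h \<longleftrightarrow> cocyc \<alpha> \<Delta> \<gamma> f g h \<and> \<not> tri \<alpha> \<Delta> \<gamma> f g h"
proof -
  have "nontrivial_ext \<alpha> \<Delta> \<gamma> f g h \<longleftrightarrow> cocyc \<alpha> \<Delta> \<gamma> f g h \<and> \<not> trivial_ext \<alpha> \<Delta> \<gamma> (canon \<alpha> \<Delta> \<gamma> f g h)"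
    unfolding nontrivial_ext_def eof_iff by blast
  then show ?thesis by (simp only: trivial_iff)
qed

lemma coboundary_iff: "is_coboundary \<alpha> \<Delta> \<gamma> f g h \<longleftrightarrow> tri \<alpha> \<Delta> \<gamma> f g h"
proof -
  have "is_coboundary \<alpha> \<Delta> \<gamma> f g h \<longleftrightarrow> cocyc \<alpha> \<Delta> \<gamma> f g h \<and> trivial_ext \<alpha> \<Delta> \<gamma> (canon \<alpha> \<Delta> \<gamma> f g h)"
    unfolding is_coboundary_def eof_iff by blast
  then show ?thesis using tri_cocyc by (simp only: trivial_iff) blast
qed

lemma equiv_formsI:
  assumes c1: "cocyc \<alpha> \<Delta> \<gamma> f g h" and c2: "cocyc \<alpha> \<Delta> \<gamma> f' g h" and fk: "f' = f + smult k [:\<alpha>+\<gamma>, \<Delta>:]"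
  shows "equiv_forms \<alpha> \<Delta> \<gamma> (f, g, h) (f', g, h)"
proof -
  have "ext_of_form \<alpha> \<Delta> \<gamma> f g h (canon \<alpha> \<Delta> \<gamma> f g h)" by (rule suff[OF c1])
  moreover have "ext_of_form \<alpha> \<Delta> \<gamma> f' g h (canon \<alpha> \<Delta> \<gamma> f' g h)" by (rule suff[OF c2])
  moreover have "ext_equiv \<gamma> (canon \<alpha> \<Delta> \<gamma> f g h) (canon \<alpha> \<Delta> \<gamma> f' g h)" by (rule equiv_shift[OF fk])
  ultimately show ?thesis unfolding equiv_forms_def by auto
qed

lemma cocycD:
  assumes "cocyc \<alpha> \<Delta> \<gamma> f g h"
  shows "g = 0"
   "\<And>lam mu. (\<alpha>+\<gamma>+lam+\<Delta>*mu) * poly f lam - (\<alpha>+\<gamma>+mu+\<Delta>*lam) * poly f mu = (lam - mu) * poly f (lam+mu)"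
   "\<And>lam mu. -(\<alpha>+\<gamma>+mu+\<Delta>*lam) * poly h mu = (lam/2 - mu) * poly h (lam+mu)"
  using assms unfolding cocyc_def by blast+

lemma eq_trick: "(a::complex) = b \<Longrightarrow> c = b - a \<Longrightarrow> c = 0" by simp

lemma eq_trick2: "(a::complex) = b \<Longrightarrow> c - d = b - a \<Longrightarrow> c = d" by simp

lemma cl_h_nz:
  assumes c: "cocyc \<alpha> \<Delta> \<gamma> f g h" and b: "\<alpha> + \<gamma> \<noteq> 0"
  shows "h = 0"
proof -
  have "(\<alpha>+\<gamma>) * poly h t = 0" for t
    by (rule eq_trick[OF cocycD(3)[OF c, where lam=0 and mu=t]]) (simp add: algebra_simps)
  then have "poly h t = 0" for t using b by simp
  then show ?thesis using poly_all_0_iff_0 by blast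
qed

lemma aux: fixes B x y D t :: complex
  assumes b: "B \<noteq> 0" and e: "B*x = (B+D*t)*y" shows "x = poly (smult (y/B) [:B, D:]) t"
proof -
  have k: "B * (y/B) = y" using b by simp
  have "B * poly (smult (y/B) [:B, D:]) t = (B * (y/B)) * (B + t*D)" by (simp add: algebra_simps)
  also have "\<dots> = B * x" using k e by (simp add: algebra_simps)
  finally show ?thesis using b by simp
qed

lemma cl_f_nz:
  assumes c: "cocyc \<alpha> \<Delta> \<gamma> f g h" and b: "\<alpha> + \<gamma> \<noteq> 0"
  shows "f = smult (poly f 0 / (\<alpha>+\<gamma>)) [:\<alpha>+\<gamma>, \<Delta>:]"
proof -
  have e: "(\<alpha>+\<gamma>+\<Delta>*t)*poly f 0 - (\<alpha>+\<gamma>)*poly f t = 0" for t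
    by (rule eq_trick[OF cocycD(2)[OF c, where lam=t and mu=0]]) (simp add: algebra_simps)
  have "poly f t = poly (smult (poly f 0 / (\<alpha>+\<gamma>)) [:\<alpha>+\<gamma>, \<Delta>:]) t" for t
  proof -
    have "(\<alpha>+\<gamma>)*poly f t = ((\<alpha>+\<gamma>)+\<Delta>*t)*poly f 0" using e[of t] by simp
    from aux[OF b this] show ?thesis .
  qed
  then show ?thesis using poly_eq_poly_eq_iff by blast
qed

lemma tri_nz:
  assumes c: "cocyc \<alpha> \<Delta> \<gamma> f g h" and b: "\<alpha> + \<gamma> \<noteq> 0"
  shows "tri \<alpha> \<Delta> \<gamma> f g h"
  unfolding tri_def using cocycD(1)[OF c] cl_h_nz[OF c b] cl_f_nz[OF c b] by blast

lemma cl_h_z: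
  assumes c: "cocyc \<alpha> \<Delta> \<gamma> f g h" and b: "\<alpha> + \<gamma> = 0" and D: "\<Delta> \<noteq> 0"
  shows "h = [:poly h 0:] \<and> (\<Delta> \<noteq> -1/2 \<longrightarrow> poly h 0 = 0)"
proof -
  have gm: "\<gamma> = -\<alpha>" using b by (simp add: eq_neg_iff_add_eq_0 add.commute)
  have H: "-(mu+\<Delta>*lam) * poly h mu = (lam/2 - mu) * poly h (lam+mu)" for lam mu
    using cocycD(3)[OF c, where lam=lam and mu=mu] gm by simp
  have t1: "poly h t = -2*\<Delta>*poly h 0" if "t \<noteq> 0" for t
  proof -
    have e: "(t/2) * poly h t = -(\<Delta>*t) * poly h 0" by (rule eq_trick2[OF H[where lam=t and mu=0]]) (simp add: algebra_simps)
    have "poly h t = (2/t) * ((t/2) * poly h t)" using that by simp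
    also have "\<dots> = (2/t) * (-(\<Delta>*t) * poly h 0)" using e by simp
    also have "\<dots> = -2*\<Delta>*poly h 0" using that by simp
    finally show ?thesis .
  qed
  have "(1+2*\<Delta>) * poly h 1 = 0" by (rule eq_trick[OF H[where lam=2 and mu=1]]) (simp add: algebra_simps)
  then have "(1+2*\<Delta>) * (-2*\<Delta>*poly h 0) = 0" using t1[of 1] by simp
  then have z: "(1+2*\<Delta>) * poly h 0 = 0" using D by simp
  have "poly h t = poly [:poly h 0:] t" for t
  proof (cases "t = 0")
    case True then show ?thesis by simp
  next
    case False
    then have "poly h t = -2*\<Delta>*poly h 0" by (rule t1)
    also have "\<dots> = poly h 0"
    proof -
      have "poly h 0 + 2*\<Delta>*poly h 0 = 0" using z by (simp add: algebra_simps)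
      then show ?thesis by (simp add: add_eq_0_iff)
    qed
    finally show ?thesis by simp
  qed
  then have "h = [:poly h 0:]" using poly_eq_poly_eq_iff by blast
  moreover have "\<Delta> \<noteq> -1/2 \<longrightarrow> poly h 0 = 0"
  proof
    assume nD: "\<Delta> \<noteq> -1/2"
    have "1 + 2*\<Delta> \<noteq> 0"
    proof
      assume z2: "1 + 2*\<Delta> = 0"
      have "\<Delta> = ((1+2*\<Delta>) - 1)/2" by simp
      also have "\<dots> = -1/2" using z2 by simp
      finally show False using nD by simp
    qed
    then show "poly h 0 = 0" using z by simp
  qed
  ultimately show ?thesis by blast
qed

lemma cl_f_z:
  assumes c: "cocyc \<alpha> \<Delta> \<gamma> f g h" and b: "\<alpha> + \<gamma> = 0" and D: "\<Delta> \<noteq> 0"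
  shows "f = monom (coeff f 1) 1 + monom (if \<Delta> = 1 then coeff f 2 else 0) 2 + monom (if \<Delta> = 2 then coeff f 3 else 0) 3"
proof -
  have gm: "\<gamma> = -\<alpha>" using b by (simp add: eq_neg_iff_add_eq_0 add.commute)
  have Hf: "(lam + \<Delta>*mu) * poly f lam - (mu + \<Delta>*lam) * poly f mu = (lam-mu)*poly f (lam+mu)" for lam mu
    using cocycD(2)[OF c, where lam=lam and mu=mu] gm by simp
  have cons: "coeff f n \<noteq> 0 \<Longrightarrow> n = 1 \<or> (n = 2 \<and> \<Delta> = 1) \<or> (n = 3 \<and> \<Delta> = 2)" for n
    by (rule coeff_constraint[OF Hf D])
  show ?thesis
  proof (rule poly_eqI)
    fix n
    have r: "coeff (monom (coeff f 1) 1 + monom (if \<Delta> = 1 then coeff f 2 else 0) 2 + monom (if \<Delta> = 2 then coeff f 3 else 0) 3) n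
      = (if n = 1 then coeff f 1 else if n = 2 then (if \<Delta> = 1 then coeff f 2 else 0) else if n = 3 then (if \<Delta> = 2 then coeff f 3 else 0) else 0)"
      by (simp add: coeff_monom)
    consider "n = 1" | "n = 2" | "n = 3" | "n \<noteq> 1 \<and> n \<noteq> 2 \<and> n \<noteq> 3" by blast
    then show "coeff f n = coeff (monom (coeff f 1) 1 + monom (if \<Delta> = 1 then coeff f 2 else 0) 2 + monom (if \<Delta> = 2 then coeff f 3 else 0) 3) n"
    proof cases
      case 1 then show ?thesis using r by simp
    next
      case 2 then show ?thesis using r cons[of 2] by auto
    next
      case 3 then show ?thesis using r cons[of 3] by auto
    next
      case 4 then show ?thesis using r cons[of n] by auto
    qed
  qed
qed

lemma mono1: fixes a \<Delta> :: complex assumes D: "\<Delta> \<noteq> 0" shows "monom a 1 = smult (a/\<Delta>) [:0, \<Delta>:]"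
proof -
  have k: "a / \<Delta> * \<Delta> = a" using nonzero_eq_divide_eq[OF D, of "a/\<Delta>" a] by simp
  show ?thesis using D by (simp add: One_nat_def monom_Suc monom_0 k)
qed

lemma tri_mono1:
  assumes "\<alpha> + \<gamma> = 0" "\<Delta> \<noteq> 0"
  shows "tri \<alpha> \<Delta> \<gamma> (monom a 1) 0 0"
proof -
  have "monom a 1 = smult (a/\<Delta>) [:\<alpha>+\<gamma>, \<Delta>:]" using mono1[OF assms(2)] assms(1) by simp
  then show ?thesis unfolding tri_def by blast
qed

lemma cocyc_m2: assumes "\<alpha> + \<gamma> = 0" shows "cocyc \<alpha> 1 \<gamma> (monom a 2) 0 0"
proof -
  have gm: "\<gamma> = -\<alpha>" using assms by (simp add: eq_neg_iff_add_eq_0 add.commute)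
  show ?thesis unfolding cocyc_def gm by (simp add: poly_monom power2_eq_square algebra_simps)
qed

lemma cocyc_m3: assumes "\<alpha> + \<gamma> = 0" shows "cocyc \<alpha> 2 \<gamma> (monom a 3) 0 0"
proof -
  have gm: "\<gamma> = -\<alpha>" using assms by (simp add: eq_neg_iff_add_eq_0 add.commute)
  show ?thesis unfolding cocyc_def gm by (simp add: poly_monom power3_eq_cube algebra_simps)
qed

lemma cocyc_h: assumes "\<alpha> + \<gamma> = 0" shows "cocyc \<alpha> (-1/2) \<gamma> 0 0 [:b:]"
proof -
  have gm: "\<gamma> = -\<alpha>" using assms by (simp add: eq_neg_iff_add_eq_0 add.commute)
  show ?thesis unfolding cocyc_def gm by (simp add: algebra_simps)
qed

lemma ntri_m: assumes "a \<noteq> 0" "n \<ge> 2" shows "\<not> tri \<alpha> \<Delta> \<gamma> (monom a n) 0 0"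
proof
  assume "tri \<alpha> \<Delta> \<gamma> (monom a n) 0 0"
  then obtain k where "monom a n = smult k [:\<alpha>+\<gamma>, \<Delta>:]" unfolding tri_def by blast
  then have "coeff (monom a n) n = coeff (smult k [:\<alpha>+\<gamma>, \<Delta>:]) n" by simp
  moreover obtain m where "n = Suc (Suc m)" using assms(2) by (metis add_2_eq_Suc le_Suc_ex)
  ultimately show False using assms(1) by simp
qed

lemma ntri_h: assumes "b \<noteq> 0" shows "\<not> tri \<alpha> \<Delta> \<gamma> f g [:b:]"
  using assms unfolding tri_def by auto

lemma tri_of: assumes "\<alpha> + \<gamma> = 0" "\<Delta> \<noteq> 0" "f = monom c 1" shows "tri \<alpha> \<Delta> \<gamma> f 0 0"
  using tri_mono1[OF assms(1,2)] assms(3) by simp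

lemma h_zero: assumes c: "cocyc \<alpha> \<Delta> \<gamma> f g h" and b: "\<alpha>+\<gamma> = 0" and D: "\<Delta> \<noteq> 0" and n: "\<Delta> \<noteq> -1/2"
  shows "h = 0"
proof -
  from cl_h_z[OF c b D] n have "h = [:poly h 0:]" "poly h 0 = 0" by auto
  then show ?thesis by simp
qed

lemma f_shape_other: assumes c: "cocyc \<alpha> \<Delta> \<gamma> f g h" and b: "\<alpha>+\<gamma> = 0" and D: "\<Delta> \<noteq> 0" and n1: "\<Delta> \<noteq> 1" and n2: "\<Delta> \<noteq> 2"
  shows "f = monom (coeff f 1) 1"
  using cl_f_z[OF c b D] n1 n2 by simp

lemma f_shape_1: assumes c: "cocyc \<alpha> 1 \<gamma> f g h" and b: "\<alpha>+\<gamma> = 0"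
  shows "f = monom (coeff f 1) 1 + monom (coeff f 2) 2"
  using cl_f_z[OF c b] by simp

lemma f_shape_2: assumes c: "cocyc \<alpha> 2 \<gamma> f g h" and b: "\<alpha>+\<gamma> = 0"
  shows "f = monom (coeff f 1) 1 + monom (coeff f 3) 3"
  using cl_f_z[OF c b] by simp

lemma P1:
  assumes D: "\<Delta> \<noteq> 0"
  shows "(\<exists>f g h. nontrivial_ext \<alpha> \<Delta> \<gamma> f g h) \<longleftrightarrow> (\<alpha> + \<gamma> = 0 \<and> \<Delta> \<in> {1, 2, -1/2})"
proof
  assume "\<exists>f g h. nontrivial_ext \<alpha> \<Delta> \<gamma> f g h"
  then obtain f g h where c: "cocyc \<alpha> \<Delta> \<gamma> f g h" and nt: "\<not> tri \<alpha> \<Delta> \<gamma> f g h"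
    unfolding nontrivial_iff by blast
  have b: "\<alpha> + \<gamma> = 0" using tri_nz[OF c] nt by blast
  have "\<Delta> \<in> {1, 2, -1/2}"
  proof (rule ccontr)
    assume "\<Delta> \<notin> {1, 2, -1/2}"
    then have n: "\<Delta> \<noteq> 1" "\<Delta> \<noteq> 2" "\<Delta> \<noteq> -1/2" by auto
    have "tri \<alpha> \<Delta> \<gamma> f g h"
      using tri_of[OF b D f_shape_other[OF c b D n(1,2)]] h_zero[OF c b D n(3)] cocycD(1)[OF c] by simp
    with nt show False by simp
  qed
  with b show "\<alpha> + \<gamma> = 0 \<and> \<Delta> \<in> {1, 2, -1/2}" by blast
next
  assume a: "\<alpha> + \<gamma> = 0 \<and> \<Delta> \<in> {1, 2, -1/2}"
  then have b: "\<alpha> + \<gamma> = 0" by blast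
  from a consider "\<Delta> = 1" | "\<Delta> = 2" | "\<Delta> = -1/2" by blast
  then show "\<exists>f g h. nontrivial_ext \<alpha> \<Delta> \<gamma> f g h"
  proof cases
    case 1
    have "nontrivial_ext \<alpha> \<Delta> \<gamma> (monom 1 2) 0 0"
      unfolding nontrivial_iff 1 using cocyc_m2[OF b] ntri_m[of 1 2] by simp
    then show ?thesis by blast
  next
    case 2
    have "nontrivial_ext \<alpha> \<Delta> \<gamma> (monom 1 3) 0 0"
      unfolding nontrivial_iff 2 using cocyc_m3[OF b] ntri_m[of 1 3] by simp
    then show ?thesis by blast
  next
    case 3
    have "nontrivial_ext \<alpha> \<Delta> \<gamma> 0 0 [:1:]"
      unfolding nontrivial_iff 3 using cocyc_h[OF b] ntri_h[of 1] by simp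
    then show ?thesis by blast
  qed
qed

lemma P2:
  assumes b: "\<alpha> + \<gamma> = 0"
  shows "(\<forall>a2. a2 \<noteq> 0 \<longrightarrow> nontrivial_ext \<alpha> 1 \<gamma> (monom a2 2) 0 0) \<and>
         (\<forall>f g h. nontrivial_ext \<alpha> 1 \<gamma> f g h \<longrightarrow>
            (\<exists>a2. a2 \<noteq> 0 \<and> equiv_forms \<alpha> 1 \<gamma> (f, g, h) (monom a2 2, 0, 0)))"
proof (intro conjI allI impI)
  fix a2 :: complex assume "a2 \<noteq> 0"
  then show "nontrivial_ext \<alpha> 1 \<gamma> (monom a2 2) 0 0"
    unfolding nontrivial_iff using cocyc_m2[OF b] ntri_m[of a2 2] by simp
next
  fix f g h assume "nontrivial_ext \<alpha> 1 \<gamma> f g h"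
  then have c: "cocyc \<alpha> 1 \<gamma> f g h" and nt: "\<not> tri \<alpha> 1 \<gamma> f g h" unfolding nontrivial_iff by blast+
  have g: "g = 0" using cocycD(1)[OF c] .
  have n: "(1::complex) \<noteq> -1/2"
  proof
    assume "(1::complex) = -1/2"
    then have "(1::complex) * 2 = (-1/2) * 2" by simp
    then show False by simp
  qed
  have h: "h = 0" using h_zero[OF c b _ n] by simp
  have fs: "f = monom (coeff f 1) 1 + monom (coeff f 2) 2" by (rule f_shape_1[OF c b])
  have a2: "coeff f 2 \<noteq> 0"
  proof
    assume "coeff f 2 = 0"
    then have "f = monom (coeff f 1) 1" using fs by simp
    then have "tri \<alpha> 1 \<gamma> f 0 0" using tri_of[OF b, of 1 f "coeff f 1"] by simp
    then have "tri \<alpha> 1 \<gamma> f g h" using g h by simp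
    with nt show False by simp
  qed
  have m1: "monom (coeff f 1) 1 = smult (coeff f 1) [:\<alpha>+\<gamma>, 1:]" using mono1[of 1 "coeff f 1"] b by simp
  have eq: "monom (coeff f 2) 2 = f + smult (- coeff f 1) [:\<alpha>+\<gamma>, 1:]"
    using fs m1 by (metis add.commute add_diff_cancel_left' smult_minus_left diff_conv_add_uminus)
  have c0: "cocyc \<alpha> 1 \<gamma> f 0 0" using c g h by simp
  have "equiv_forms \<alpha> 1 \<gamma> (f, 0, 0) (monom (coeff f 2) 2, 0, 0)"
    by (rule equiv_formsI[OF c0 cocyc_m2[OF b] eq])
  then have "equiv_forms \<alpha> 1 \<gamma> (f, g, h) (monom (coeff f 2) 2, 0, 0)" using g h by simp
  then show "\<exists>a2. a2 \<noteq> 0 \<and> equiv_forms \<alpha> 1 \<gamma> (f, g, h) (monom a2 2, 0, 0)"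
    using a2 g h by blast
qed


lemma n2: "(2::complex) \<noteq> -1/2"
proof
  assume "(2::complex) = -1/2"
  then have "(2::complex) * 2 = (-1/2) * 2" by simp
  then show False by simp
qed

lemma n3: "(-1/2::complex) \<noteq> 1" "(-1/2::complex) \<noteq> 2" "(-1/2::complex) \<noteq> 0"
proof -
  show "(-1/2::complex) \<noteq> 1"
  proof
    assume "(-1/2::complex) = 1"
    then have "(-1/2::complex) * 2 = 1 * 2" by simp
    then show False by simp
  qed
  show "(-1/2::complex) \<noteq> 2"
  proof
    assume "(-1/2::complex) = 2"
    then have "(-1/2::complex) * 2 = 2 * 2" by simp
    then show False by simp
  qed
  show "(-1/2::complex) \<noteq> 0" by simp
qed

lemma P3:
  assumes b: "\<alpha> + \<gamma> = 0"
  shows "(\<forall>a3. a3 \<noteq> 0 \<longrightarrow> nontrivial_ext \<alpha> 2 \<gamma> (monom a3 3) 0 0) \<and>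
         (\<forall>f g h. nontrivial_ext \<alpha> 2 \<gamma> f g h \<longrightarrow>
            (\<exists>a3. a3 \<noteq> 0 \<and> equiv_forms \<alpha> 2 \<gamma> (f, g, h) (monom a3 3, 0, 0)))"
proof (intro conjI allI impI)
  fix a3 :: complex assume "a3 \<noteq> 0"
  then show "nontrivial_ext \<alpha> 2 \<gamma> (monom a3 3) 0 0"
    unfolding nontrivial_iff using cocyc_m3[OF b] ntri_m[of a3 3] by simp
next
  fix f g h assume "nontrivial_ext \<alpha> 2 \<gamma> f g h"
  then have c: "cocyc \<alpha> 2 \<gamma> f g h" and nt: "\<not> tri \<alpha> 2 \<gamma> f g h" unfolding nontrivial_iff by blast+
  have g: "g = 0" using cocycD(1)[OF c] .
  have h: "h = 0" using h_zero[OF c b _ n2] by simp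
  have fs: "f = monom (coeff f 1) 1 + monom (coeff f 3) 3" by (rule f_shape_2[OF c b])
  have a3: "coeff f 3 \<noteq> 0"
  proof
    assume "coeff f 3 = 0"
    then have "f = monom (coeff f 1) 1" using fs by simp
    then have "tri \<alpha> 2 \<gamma> f 0 0" using tri_of[OF b, of 2 f "coeff f 1"] by simp
    then have "tri \<alpha> 2 \<gamma> f g h" using g h by simp
    with nt show False by simp
  qed
  have m1: "monom (coeff f 1) 1 = smult (coeff f 1 / 2) [:\<alpha>+\<gamma>, 2:]" using mono1[of 2 "coeff f 1"] b by simp
  have eq: "monom (coeff f 3) 3 = f + smult (- (coeff f 1 / 2)) [:\<alpha>+\<gamma>, 2:]"
    using fs m1 by (metis add.commute add_diff_cancel_left' smult_minus_left diff_conv_add_uminus)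
  have c0: "cocyc \<alpha> 2 \<gamma> f 0 0" using c g h by simp
  have "equiv_forms \<alpha> 2 \<gamma> (f, 0, 0) (monom (coeff f 3) 3, 0, 0)"
    by (rule equiv_formsI[OF c0 cocyc_m3[OF b] eq])
  then have "equiv_forms \<alpha> 2 \<gamma> (f, g, h) (monom (coeff f 3) 3, 0, 0)" using g h by simp
  then show "\<exists>a3. a3 \<noteq> 0 \<and> equiv_forms \<alpha> 2 \<gamma> (f, g, h) (monom a3 3, 0, 0)"
    using a3 by blast
qed

lemma P4:
  assumes b: "\<alpha> + \<gamma> = 0"
  shows "(\<forall>b0. b0 \<noteq> 0 \<longrightarrow> nontrivial_ext \<alpha> (-1/2) \<gamma> 0 0 [:b0:]) \<and>
         (\<forall>f g h. nontrivial_ext \<alpha> (-1/2) \<gamma> f g h \<longrightarrow>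
            (\<exists>b0. b0 \<noteq> 0 \<and> equiv_forms \<alpha> (-1/2) \<gamma> (f, g, h) (0, 0, [:b0:])))"
proof (intro conjI allI impI)
  fix b0 :: complex assume "b0 \<noteq> 0"
  then show "nontrivial_ext \<alpha> (-1/2) \<gamma> 0 0 [:b0:]"
    unfolding nontrivial_iff using cocyc_h[OF b] ntri_h[of b0] by simp
next
  fix f g h assume "nontrivial_ext \<alpha> (-1/2) \<gamma> f g h"
  then have c: "cocyc \<alpha> (-1/2) \<gamma> f g h" and nt: "\<not> tri \<alpha> (-1/2) \<gamma> f g h" unfolding nontrivial_iff by blast+
  have g: "g = 0" using cocycD(1)[OF c] .
  have h: "h = [:poly h 0:]" using cl_h_z[OF c b n3(3)] by blast
  have fs: "f = monom (coeff f 1) 1" by (rule f_shape_other[OF c b n3(3) n3(1) n3(2)])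
  have b0: "poly h 0 \<noteq> 0"
  proof
    assume "poly h 0 = 0"
    then have h0: "h = 0" using h by simp
    have "tri \<alpha> (-1/2) \<gamma> f 0 0" using tri_of[OF b n3(3) fs] .
    then have "tri \<alpha> (-1/2) \<gamma> f g h" using g h0 by simp
    with nt show False by simp
  qed
  have m1: "monom (coeff f 1) 1 = smult (coeff f 1 / (-1/2)) [:\<alpha>+\<gamma>, -1/2:]" using mono1[OF n3(3), of "coeff f 1"] b by simp
  have eq: "0 = f + smult (- (coeff f 1 / (-1/2))) [:\<alpha>+\<gamma>, -1/2:]"
    using fs m1 by (metis add.right_inverse smult_minus_left)
  have c0: "cocyc \<alpha> (-1/2) \<gamma> f 0 [:poly h 0:]" using c g h by simp
  have "equiv_forms \<alpha> (-1/2) \<gamma> (f, 0, [:poly h 0:]) (0, 0, [:poly h 0:])"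
    by (rule equiv_formsI[OF c0 cocyc_h[OF b] eq])
  then have "equiv_forms \<alpha> (-1/2) \<gamma> (f, g, h) (0, 0, [:poly h 0:])" using g h by simp
  then show "\<exists>b0. b0 \<noteq> 0 \<and> equiv_forms \<alpha> (-1/2) \<gamma> (f, g, h) (0, 0, [:b0:])"
    using b0 by blast
qed


lemma n1: "(1::complex) \<noteq> -1/2"
proof
  assume "(1::complex) = -1/2"
  then have "(1::complex) * 2 = (-1/2) * 2" by simp
  then show False by simp
qed

lemma P5:
  assumes b: "\<alpha> + \<gamma> = 0" and D: "\<Delta> \<in> {1, 2, -1/2}"
  shows "ext_dim_one \<alpha> \<Delta> \<gamma>"
proof -
  from D consider "\<Delta> = 1" | "\<Delta> = 2" | "\<Delta> = -1/2" by blast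
  then show ?thesis
  proof cases
    case 1
    have A: "cocyc \<alpha> 1 \<gamma> (monom 1 2) 0 0" by (rule cocyc_m2[OF b])
    have B: "\<not> tri \<alpha> 1 \<gamma> (monom 1 2) 0 0" by (rule ntri_m) simp_all
    have C: "\<exists>s. tri \<alpha> 1 \<gamma> (f - smult s (monom 1 2)) (g - smult s 0) (h - smult s 0)" if c: "cocyc \<alpha> 1 \<gamma> f g h" for f g h
    proof -
      have g: "g = 0" using cocycD(1)[OF c] .
      have h: "h = 0" using h_zero[OF c b _ n1] by simp
      have fs: "f = monom (coeff f 1) 1 + monom (coeff f 2) 2" by (rule f_shape_1[OF c b])
      have "f - smult (coeff f 2) (monom 1 2) = monom (coeff f 1) 1"
        using fs by (simp add: smult_monom) (metis add_diff_cancel_right')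
      then have "tri \<alpha> 1 \<gamma> (f - smult (coeff f 2) (monom 1 2)) 0 0" using tri_of[OF b] by simp
      then show ?thesis using g h by auto
    qed
    show ?thesis unfolding ext_dim_one_def is_cocycle_iff coboundary_iff 1 using A B C by blast
  next
    case 2
    have A: "cocyc \<alpha> 2 \<gamma> (monom 1 3) 0 0" by (rule cocyc_m3[OF b])
    have B: "\<not> tri \<alpha> 2 \<gamma> (monom 1 3) 0 0" by (rule ntri_m) simp_all
    have C: "\<exists>s. tri \<alpha> 2 \<gamma> (f - smult s (monom 1 3)) (g - smult s 0) (h - smult s 0)" if c: "cocyc \<alpha> 2 \<gamma> f g h" for f g h
    proof -
      have g: "g = 0" using cocycD(1)[OF c] .
      have h: "h = 0" using h_zero[OF c b _ n2] by simp
      have fs: "f = monom (coeff f 1) 1 + monom (coeff f 3) 3" by (rule f_shape_2[OF c b])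
      have "f - smult (coeff f 3) (monom 1 3) = monom (coeff f 1) 1"
        using fs by (simp add: smult_monom) (metis add_diff_cancel_right')
      then have "tri \<alpha> 2 \<gamma> (f - smult (coeff f 3) (monom 1 3)) 0 0" using tri_of[OF b] by simp
      then show ?thesis using g h by auto
    qed
    show ?thesis unfolding ext_dim_one_def is_cocycle_iff coboundary_iff 2 using A B C by blast
  next
    case 3
    have A: "cocyc \<alpha> (-1/2) \<gamma> 0 0 [:1:]" by (rule cocyc_h[OF b])
    have B: "\<not> tri \<alpha> (-1/2) \<gamma> 0 0 [:1:]" by (rule ntri_h) simp
    have C: "\<exists>s. tri \<alpha> (-1/2) \<gamma> (f - smult s 0) (g - smult s 0) (h - smult s [:1:])" if c: "cocyc \<alpha> (-1/2) \<gamma> f g h" for f g h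
    proof -
      have g: "g = 0" using cocycD(1)[OF c] .
      have h: "h = [:poly h 0:]" using cl_h_z[OF c b n3(3)] by blast
      have fs: "f = monom (coeff f 1) 1" by (rule f_shape_other[OF c b n3(3) n3(1) n3(2)])
      have hh: "h - smult (poly h 0) [:1:] = 0" by (subst h) simp
      have "tri \<alpha> (-1/2) \<gamma> f 0 0" using tri_of[OF b n3(3) fs] .
      then have "tri \<alpha> (-1/2) \<gamma> (f - smult (poly h 0) 0) (g - smult (poly h 0) 0) (h - smult (poly h 0) [:1:])"
        using g hh by simp
      then show ?thesis by blast
    qed
    show ?thesis unfolding ext_dim_one_def is_cocycle_iff coboundary_iff 3 using A B C by blast
  qed
qed

theorem theorem3p2:
  fixes \<alpha> \<gamma> \<Delta> :: complex
  assumes "\<Delta> \<noteq> 0"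
  shows "((\<exists>f g h. nontrivial_ext \<alpha> \<Delta> \<gamma> f g h) \<longleftrightarrow> (\<alpha> + \<gamma> = 0 \<and> \<Delta> \<in> {1, 2, -1/2}))
    \<and> (\<alpha> + \<gamma> = 0 \<and> \<Delta> = 1 \<longrightarrow>
         (\<forall>a2. a2 \<noteq> 0 \<longrightarrow> nontrivial_ext \<alpha> \<Delta> \<gamma> (monom a2 2) 0 0) \<and>
         (\<forall>f g h. nontrivial_ext \<alpha> \<Delta> \<gamma> f g h \<longrightarrow>
            (\<exists>a2. a2 \<noteq> 0 \<and> equiv_forms \<alpha> \<Delta> \<gamma> (f, g, h) (monom a2 2, 0, 0))))
    \<and> (\<alpha> + \<gamma> = 0 \<and> \<Delta> = 2 \<longrightarrow>
         (\<forall>a3. a3 \<noteq> 0 \<longrightarrow> nontrivial_ext \<alpha> \<Delta> \<gamma> (monom a3 3) 0 0) \<and>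
         (\<forall>f g h. nontrivial_ext \<alpha> \<Delta> \<gamma> f g h \<longrightarrow>
            (\<exists>a3. a3 \<noteq> 0 \<and> equiv_forms \<alpha> \<Delta> \<gamma> (f, g, h) (monom a3 3, 0, 0))))
    \<and> (\<alpha> + \<gamma> = 0 \<and> \<Delta> = -1/2 \<longrightarrow>
         (\<forall>b0. b0 \<noteq> 0 \<longrightarrow> nontrivial_ext \<alpha> \<Delta> \<gamma> 0 0 [:b0:]) \<and>
         (\<forall>f g h. nontrivial_ext \<alpha> \<Delta> \<gamma> f g h \<longrightarrow>
            (\<exists>b0. b0 \<noteq> 0 \<and> equiv_forms \<alpha> \<Delta> \<gamma> (f, g, h) (0, 0, [:b0:]))))
    \<and> (\<alpha> + \<gamma> = 0 \<and> \<Delta> \<in> {1, 2, -1/2} \<longrightarrow> ext_dim_one \<alpha> \<Delta> \<gamma>)"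
proof (intro conjI impI)
  show "(\<exists>f g h. nontrivial_ext \<alpha> \<Delta> \<gamma> f g h) \<longleftrightarrow> (\<alpha> + \<gamma> = 0 \<and> \<Delta> \<in> {1, 2, -1/2})"
    by (rule P1[OF assms])
next
  assume a: "\<alpha> + \<gamma> = 0 \<and> \<Delta> = 1"
  then show "\<forall>a2. a2 \<noteq> 0 \<longrightarrow> nontrivial_ext \<alpha> \<Delta> \<gamma> (monom a2 2) 0 0" using P2[of \<alpha> \<gamma>] by simp
  from a show "\<forall>f g h. nontrivial_ext \<alpha> \<Delta> \<gamma> f g h \<longrightarrow>
            (\<exists>a2. a2 \<noteq> 0 \<and> equiv_forms \<alpha> \<Delta> \<gamma> (f, g, h) (monom a2 2, 0, 0))" using P2[of \<alpha> \<gamma>] by simp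
next
  assume a: "\<alpha> + \<gamma> = 0 \<and> \<Delta> = 2"
  then show "\<forall>a3. a3 \<noteq> 0 \<longrightarrow> nontrivial_ext \<alpha> \<Delta> \<gamma> (monom a3 3) 0 0" using P3[of \<alpha> \<gamma>] by simp
  from a show "\<forall>f g h. nontrivial_ext \<alpha> \<Delta> \<gamma> f g h \<longrightarrow>
            (\<exists>a3. a3 \<noteq> 0 \<and> equiv_forms \<alpha> \<Delta> \<gamma> (f, g, h) (monom a3 3, 0, 0))" using P3[of \<alpha> \<gamma>] by simp
next
  assume a: "\<alpha> + \<gamma> = 0 \<and> \<Delta> = -1/2"
  then show "\<forall>b0. b0 \<noteq> 0 \<longrightarrow> nontrivial_ext \<alpha> \<Delta> \<gamma> 0 0 [:b0:]" using P4[of \<alpha> \<gamma>] by simp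
  from a show "\<forall>f g h. nontrivial_ext \<alpha> \<Delta> \<gamma> f g h \<longrightarrow>
            (\<exists>b0. b0 \<noteq> 0 \<and> equiv_forms \<alpha> \<Delta> \<gamma> (f, g, h) (0, 0, [:b0:]))" using P4[of \<alpha> \<gamma>] by simp
next
  assume "\<alpha> + \<gamma> = 0 \<and> \<Delta> \<in> {1, 2, -1/2}"
  then show "ext_dim_one \<alpha> \<Delta> \<gamma>" using P5 by blast
qed

end
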